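(* For $n=0,1,2,\ldots$ let $R_n=\sum_{k=0}^n\binom{n}{k}\binom{n+k}{k}\frac{1}{2k-1}$. The sequence $\{\sqrt[n]{R_n}\}_{n=5}^\infty$ is strictly log-concave; equivalently, the sequence $\left\{\frac{\sqrt[n+1]{R_{n+1}}}{\sqrt[n]{R_n}}\right\}_{n=5}^\infty$ is strictly decreasing.
   Context: A sequence $\{z_n\}$ of positive numbers is strictly log-concave if $z_{n-1}z_{n+1}<z_n^2$ for all indices $n$ for which $z_{n-1},z_n,z_{n+1}$ belong to the sequence. *)

theory Defs
  imports Complex_Main
begin

definition R :: "nat \<Rightarrow> real" where
  "R n = (\<Sum>k=0..n. real (n choose k) * real ((n + k) choose k) / (2 * real k - 1))"

definition strictly_log_concave_from :: "nat \<Rightarrow> (nat \<Rightarrow> real) \<Rightarrow> bool" where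
  "strictly_log_concave_from m z \<longleftrightarrow>
     (\<forall>n\<ge>m. z n > 0) \<and> (\<forall>n. n \<ge> Suc m \<longrightarrow> z (n - 1) * z (n + 1) < (z n)^2)"

end

theory Submission
  imports Defs
begin


definition f :: "nat \<Rightarrow> nat \<Rightarrow> real" where
  "f m k = real (m choose k) * real ((m + k) choose k) / (2 * real k - 1)"

lemma binA: "real (Suc m) * real (m choose k) = (real (Suc m) - real k) * real (Suc m choose k)"
proof (cases "k \<le> Suc m")
  case True
  have "(Suc m - k) * (Suc m choose k) = Suc m * (m choose k)"
    using binomial_absorb_comp[of "Suc m" k] by simp
  then have h: "real (Suc m - k) * real (Suc m choose k) = real (Suc m) * real (m choose k)"
    by (metis of_nat_mult)
  have "real (Suc m - k) = real (Suc m) - real k" using True by (simp add: of_nat_diff)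
  then show ?thesis using h by simp
next
  case False
  then show ?thesis by (simp add: binomial_eq_0)
qed

lemma binC: "real (Suc j) * real (Suc m choose Suc j) = real (Suc m) * real (m choose j)"
  using Suc_times_binomial[of j m] by (metis of_nat_mult)

lemma binD: "real (Suc j) * real (Suc (j + n) choose Suc j) = real (Suc n) * real (Suc (j + n) choose j)"
  using Suc_times_binomial_add[of j n] by (metis of_nat_mult)

lemma ident:
  fixes N K a b :: real
  assumes "N \<ge> 0" "K \<ge> 1"
  shows "- (N + 1) * ((a * (N + 3 - K) / (N + 3)) * (N + 2 - K) / (N + 2) * (N + 1 - K) / (N + 1) * b / (2 * K - 1)) +
    (7 * N + 15) * ((a * (N + 3 - K) / (N + 3)) * (N + 2 - K) / (N + 2) * (b * (N + 1 + K) / (N + 1)) / (2 * K - 1)) -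
    (7 * N + 13) * ((a * (N + 3 - K) / (N + 3)) * ((b * (N + 1 + K) / (N + 1)) * (N + 2 + K) / (N + 2)) / (2 * K - 1)) +
    (N + 3) * (a * ((b * (N + 1 + K) / (N + 1)) * (N + 2 + K) / (N + 2) * (N + 3 + K) / (N + 3)) / (2 * K - 1)) =
    - 4 * (a * (N + 3 - K) / (N + 3)) * (b * (N + 1 + K) / (N + 1)) + 4 * (K * a / (N + 3)) * (K * b / (N + 1))"
proof -
  have h: "2*K - 1 \<noteq> 0" "N+1 \<noteq> 0" "N+2 \<noteq> 0" "N+3 \<noteq> 0" using assms by auto
  show ?thesis using h by (simp add: divide_simps) (simp add: algebra_simps)
qed

lemma perk:
  fixes n j :: nat
  shows "-(real n+1) * f n (Suc j) + (7*real n+15) * f (n+1) (Suc j) - (7*real n+13) * f (n+2) (Suc j)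
     + (real n+3) * f (n+3) (Suc j)
   = -4 * real ((n+2) choose (Suc j)) * real ((n + Suc (Suc j)) choose (Suc j))
     + 4 * real ((n+2) choose j) * real ((n + Suc j) choose j)"
proof -
  define k where "k = Suc j"
  define N where "N = real n"
  define K where "K = real k"
  define \<alpha> where "\<alpha> = real ((n+3) choose k)"
  define \<beta> where "\<beta> = real ((n+k) choose k)"
  have c2: "real ((n+2) choose k) = \<alpha> * (N+3-K)/(N+3)"
    using binA[of "n+2" k] unfolding \<alpha>_def N_def K_def by (simp add: field_simps eval_nat_numeral del: binomial_Suc_Suc)
  have c1: "real ((n+1) choose k) = real ((n+2) choose k) * (N+2-K)/(N+2)"
    using binA[of "n+1" k] unfolding N_def K_def by (simp add: field_simps del: binomial_Suc_Suc)
  have c0: "real (n choose k) = real ((n+1) choose k) * (N+1-K)/(N+1)"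
    using binA[of "n" k] unfolding N_def K_def by (simp add: field_simps del: binomial_Suc_Suc)
  have b1: "real ((n+1+k) choose k) = \<beta> * (N+1+K)/(N+1)"
    using binA[of "n+k" k] unfolding \<beta>_def N_def K_def by (simp add: field_simps del: binomial_Suc_Suc)
  have b2: "real ((n+2+k) choose k) = real ((n+1+k) choose k) * (N+2+K)/(N+2)"
    using binA[of "n+1+k" k] unfolding N_def K_def by (simp add: field_simps del: binomial_Suc_Suc)
  have b3: "real ((n+3+k) choose k) = real ((n+2+k) choose k) * (N+3+K)/(N+3)"
    using binA[of "n+2+k" k] unfolding N_def K_def by (simp add: field_simps eval_nat_numeral del: binomial_Suc_Suc)
  have e1: "real ((n+2) choose j) = K * \<alpha> / (N+3)"
    using binC[of j "n+2"] unfolding \<alpha>_def N_def K_def k_def by (simp add: field_simps eval_nat_numeral del: binomial_Suc_Suc)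
  have e2: "real ((n + k) choose j) = K * \<beta> / (N+1)"
    using binD[of j n, unfolded add.commute[of j n]] unfolding k_def[symmetric] add_Suc_right[symmetric] unfolding \<beta>_def N_def K_def k_def by (simp add: field_simps del: binomial_Suc_Suc)
  have K1: "K \<ge> 1" unfolding K_def k_def by simp
  have fn: "f n k = real (n choose k) * \<beta> / (2*K-1)" unfolding f_def \<beta>_def K_def by simp
  have f1: "f (n+1) k = real ((n+1) choose k) * real ((n+1+k) choose k) / (2*K-1)" unfolding f_def K_def by (simp add: ac_simps)
  have f2: "f (n+2) k = real ((n+2) choose k) * real ((n+2+k) choose k) / (2*K-1)" unfolding f_def K_def by (simp add: ac_simps)
  have f3: "f (n+3) k = \<alpha> * real ((n+3+k) choose k) / (2*K-1)" unfolding f_def K_def \<alpha>_def by (simp add: ac_simps)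
  have r1: "real ((n + Suc k) choose k) = real ((n+1+k) choose k)" by (simp add: ac_simps)
  have N0: "N \<ge> 0" unfolding N_def by simp
  show ?thesis
    unfolding k_def[symmetric] r1 e1 e2 fn f1 f2 f3 b3 b2 b1 c0 c1 c2 N_def[symmetric]
    by (rule ident[OF N0 K1])
qed

lemma R_ext: assumes "m \<le> M" shows "R m = (\<Sum>k<Suc M. f m k)"
proof -
  have "R m = (\<Sum>k\<in>{..<Suc m}. f m k)" unfolding R_def f_def by (simp add: atLeast0AtMost lessThan_Suc_atMost)
  also have "\<dots> = (\<Sum>k\<in>{..<Suc M}. f m k)"
    by (rule sum.mono_neutral_left) (use assms in \<open>auto simp: f_def binomial_eq_0\<close>)
  finally show ?thesis .
qed

lemma R_rec: "(real n+3) * R (n+3) = (7*real n+13)*R(n+2) - (7*real n+15)*R(n+1) + (real n+1)*R n"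
proof -
  define g where "g j = (if j = 0 then 0 else -4 * real ((n+2) choose (j-1)) * real ((n+j) choose (j-1)))" for j
  define t where "t k = -(real n+1) * f n k + (7*real n+15) * f (n+1) k - (7*real n+13) * f (n+2) k
     + (real n+3) * f (n+3) k" for k
  have tk: "t k = g (Suc k) - g k" for k
  proof (cases k)
    case 0 then show ?thesis unfolding t_def g_def f_def by simp
  next
    case (Suc j) then show ?thesis unfolding t_def g_def using perk[of n j] by simp
  qed
  have "(\<Sum>k<Suc (n+3). t k) = g (Suc (n+3)) - g 0" unfolding tk by (rule sum_lessThan_telescope)
  also have "\<dots> = 0" unfolding g_def by (simp add: binomial_eq_0)
  finally have s0: "(\<Sum>k<Suc (n+3). t k) = 0" .
  have e0: "R n = (\<Sum>k<Suc (n+3). f n k)" by (rule R_ext) simp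
  have e1: "R (n+1) = (\<Sum>k<Suc (n+3). f (n+1) k)" by (rule R_ext) simp
  have e2: "R (n+2) = (\<Sum>k<Suc (n+3). f (n+2) k)" by (rule R_ext) simp
  have e3: "R (n+3) = (\<Sum>k<Suc (n+3). f (n+3) k)" by (rule R_ext) simp
  have "(\<Sum>k<Suc (n+3). t k) = -(real n+1) * R n + (7*real n+15) * R (n+1) - (7*real n+13) * R (n+2) + (real n+3) * R (n+3)"
    unfolding t_def e0 e1 e2 e3
    by (simp add: sum.distrib sum_subtractf sum_distrib_left del: sum.lessThan_Suc)
  with s0 show ?thesis by linarith
qed



definition s2 :: real where "s2 = sqrt 2"
definition LL :: real where "LL = 3 + 2 * s2"
definition lo :: "real \<Rightarrow> real" where "lo x = LL * (10*x - 12) / (10*x + 3)"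
definition hi :: "real \<Rightarrow> real" where "hi x = LL * (10*x - 8) / (10*x + 7)"

lemma s2_sq: "s2 * s2 = 2" unfolding s2_def by simp
lemma s2_pos: "s2 \<ge> 0" unfolding s2_def by simp

lemma K1_id:
  assumes "x \<ge> 0"
  shows "((7*x+13)*lo(x+1)*hi x - (7*x+15)*hi x + (x+1) - (x+3)*lo(x+2)*lo(x+1)*hi x)
     * ((x+13/10)*(x+7/10)*(x+23/10))
   = ((30609/200) + (12786/125)*s2) + ((-39771/200) + (-1473/10)*s2)*x + ((369/10) + (243/10)*s2)*x^2"
proof -
  have u: "lo(x+1) * (10*x+13) = LL*(10*x-2)" unfolding lo_def using assms by (simp add: field_simps)
  have v: "hi x * (10*x+7) = LL*(10*x-8)" unfolding hi_def using assms by (simp add: field_simps)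
  have w: "lo(x+2) * (10*x+23) = LL*(10*x+8)" unfolding lo_def using assms by (simp add: field_simps)
  have l: "LL = 3 + 2*s2" by (simp add: LL_def)
  show ?thesis using u v w l s2_sq by algebra
qed

lemma K2_id:
  assumes "x \<ge> 0"
  shows "((x+3)*hi(x+2)*hi(x+1)*lo x - ((7*x+13)*hi(x+1)*lo x - (7*x+15)*lo x + (x+1)))
     * ((x+17/10)*(x+3/10)*(x+27/10))
   = ((-38313/200) + (-15579/125)*s2) + ((23331/200) + (927/10)*s2)*x + ((99/10) + (93/10)*s2)*x^2"
proof -
  have u: "hi(x+1) * (10*x+17) = LL*(10*x+2)" unfolding hi_def using assms by (simp add: field_simps)
  have v: "lo x * (10*x+3) = LL*(10*x-12)" unfolding lo_def using assms by (simp add: field_simps)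
  have w: "hi(x+2) * (10*x+27) = LL*(10*x+12)" unfolding hi_def using assms by (simp add: field_simps)
  have l: "LL = 3 + 2*s2" by (simp add: LL_def)
  show ?thesis using u v w l s2_sq by algebra
qed

lemma quad_nonneg: fixes e0 e1 e2 y :: real
  assumes "0 \<le> e0" "0 \<le> e1" "0 \<le> e2" "0 \<le> y" shows "0 \<le> e0 + e1*y + e2*y^2"
  using assms by (simp add: add_nonneg_nonneg mult_nonneg_nonneg)

lemma K1: assumes "x \<ge> 8"
  shows "(x+3)*lo(x+2)*lo(x+1)*hi x \<le> (7*x+13)*lo(x+1)*hi x - (7*x+15)*hi x + (x+1)"
proof -
  define y where "y = x - 8"
  have y: "y \<ge> 0" using assms y_def by simp
  have e: "((30609/200) + (12786/125)*s2) + ((-39771/200) + (-1473/10)*s2)*x + ((369/10) + (243/10)*s2)*x^2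
     = ((184761/200) + (59886/125)*s2) + ((78309/200) + (483/2)*s2)*y + ((369/10) + (243/10)*s2)*y^2"
    unfolding y_def by (simp add: field_simps power2_eq_square)
  have p: "0 \<le> ((184761/200) + (59886/125)*s2) + ((78309/200) + (483/2)*s2)*y + ((369/10) + (243/10)*s2)*y^2"
    by (rule quad_nonneg) (use y s2_pos in auto)
  have D: "(x+13/10)*(x+7/10)*(x+23/10) > 0" using assms by simp
  have "0 \<le> ((7*x+13)*lo(x+1)*hi x - (7*x+15)*hi x + (x+1) - (x+3)*lo(x+2)*lo(x+1)*hi x)
     * ((x+13/10)*(x+7/10)*(x+23/10))" using K1_id[of x] assms e p by simp
  then show ?thesis using D by (simp add: zero_le_mult_iff)
qed

lemma K2: assumes "x \<ge> 8"
  shows "(7*x+13)*hi(x+1)*lo x - (7*x+15)*lo x + (x+1) \<le> (x+3)*hi(x+2)*hi(x+1)*lo x"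
proof -
  define y where "y = x - 8"
  have y: "y \<ge> 0" using assms y_def by simp
  have e: "((-38313/200) + (-15579/125)*s2) + ((23331/200) + (927/10)*s2)*x + ((99/10) + (93/10)*s2)*x^2
     = ((55011/40) + (151521/125)*s2) + ((55011/200) + (483/2)*s2)*y + ((99/10) + (93/10)*s2)*y^2"
    unfolding y_def by (simp add: field_simps power2_eq_square)
  have p: "0 \<le> ((55011/40) + (151521/125)*s2) + ((55011/200) + (483/2)*s2)*y + ((99/10) + (93/10)*s2)*y^2"
    by (rule quad_nonneg) (use y s2_pos in auto)
  have D: "(x+17/10)*(x+3/10)*(x+27/10) > 0" using assms by simp
  have "0 \<le> ((x+3)*hi(x+2)*hi(x+1)*lo x - ((7*x+13)*hi(x+1)*lo x - (7*x+15)*lo x + (x+1)))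
     * ((x+17/10)*(x+3/10)*(x+27/10))" using K2_id[of x] assms e p by simp
  then show ?thesis using D by (simp add: zero_le_mult_iff)
qed



lemma R0: "R 0 = -1" by (simp add: R_def)
lemma R1: "R 1 = 1" by (simp add: R_def)
lemma R2: "R 2 = 7" by (simp add: R_def eval_nat_numeral)
lemma R3: "R 3 = 25" using R_rec[of 0] R0 R1 R2 by (simp add: eval_nat_numeral)
lemma R4: "R 4 = 87" using R_rec[of 1] R1 R2 R3 by (simp add: eval_nat_numeral)
lemma R5: "R 5 = 329" using R_rec[of 2] R2 R3 R4 by (simp add: eval_nat_numeral)
lemma R6: "R 6 = 1359" using R_rec[of 3] R3 R4 R5 by (simp add: eval_nat_numeral)
lemma R7: "R 7 = 6001" using R_rec[of 4] R4 R5 R6 by (simp add: eval_nat_numeral)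
lemma R8: "R 8 = 27759" using R_rec[of 5] R5 R6 R7 by (simp add: eval_nat_numeral)
lemma R9: "R 9 = 132689" using R_rec[of 6] R6 R7 R8 by (simp add: eval_nat_numeral)
lemma R10: "R 10 = 649815" using R_rec[of 7] R7 R8 R9 by (simp add: eval_nat_numeral)

lemma step_lo:
  fixes a b c d lo1 lo2 hi0 n :: real
  assumes "hi0 > 0" "lo1 > 0" "b \<le> hi0*a" "lo1*b \<le> c" "c \<ge> 0" "n \<ge> 0"
    "(7*n+15)*hi0 - (n+1) \<ge> 0"
    "(n+3)*lo2*lo1*hi0 \<le> (7*n+13)*lo1*hi0 - (7*n+15)*hi0 + (n+1)"
    "(n+3)*d = (7*n+13)*c - (7*n+15)*b + (n+1)*a"
  shows "lo2*c \<le> d"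
proof -
  have id: "hi0*lo1*((n+3)*(d - lo2*c)) = (n+1)*lo1*(hi0*a - b) + ((7*n+15)*hi0 - (n+1))*(c - lo1*b)
     + c*((7*n+13)*lo1*hi0 - (7*n+15)*hi0 + (n+1) - (n+3)*lo2*lo1*hi0)"
    using assms(9) by algebra
  have "0 \<le> (n+1)*lo1*(hi0*a - b)" using assms by simp
  moreover have "0 \<le> ((7*n+15)*hi0 - (n+1))*(c - lo1*b)" using assms by simp
  moreover have "0 \<le> c*((7*n+13)*lo1*hi0 - (7*n+15)*hi0 + (n+1) - (n+3)*lo2*lo1*hi0)" using assms by simp
  ultimately have "0 \<le> hi0*lo1*((n+3)*(d - lo2*c))" unfolding id by linarith
  moreover have p: "hi0*lo1 > 0" using assms(1,2) by simp
  ultimately have "0 \<le> (n+3)*(d - lo2*c)" using mult_le_cancel_left_pos[OF p, of 0 "(n+3)*(d - lo2*c)"] by simp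
  moreover have p2: "n+3 > 0" using assms(6) by simp
  ultimately have "0 \<le> d - lo2*c" using mult_le_cancel_left_pos[OF p2, of 0 "d - lo2*c"] by simp
  then show ?thesis by simp
qed

lemma step_hi:
  fixes a b c d lo0 hi1 hi2 n :: real
  assumes "lo0 > 0" "hi1 > 0" "lo0*a \<le> b" "c \<le> hi1*b" "c \<ge> 0" "n \<ge> 0"
    "(7*n+15)*lo0 - (n+1) \<ge> 0"
    "(7*n+13)*hi1*lo0 - (7*n+15)*lo0 + (n+1) \<le> (n+3)*hi2*hi1*lo0"
    "(n+3)*d = (7*n+13)*c - (7*n+15)*b + (n+1)*a"
  shows "d \<le> hi2*c"
proof -
  have id: "hi1*lo0*((n+3)*(hi2*c - d)) = (n+1)*hi1*(b - lo0*a) + ((7*n+15)*lo0 - (n+1))*(hi1*b - c)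
     + c*((n+3)*hi2*hi1*lo0 - ((7*n+13)*hi1*lo0 - (7*n+15)*lo0 + (n+1)))"
    using assms(9) by algebra
  have "0 \<le> (n+1)*hi1*(b - lo0*a)" using assms by simp
  moreover have "0 \<le> ((7*n+15)*lo0 - (n+1))*(hi1*b - c)" using assms by simp
  moreover have "0 \<le> c*((n+3)*hi2*hi1*lo0 - ((7*n+13)*hi1*lo0 - (7*n+15)*lo0 + (n+1)))" using assms by simp
  ultimately have "0 \<le> hi1*lo0*((n+3)*(hi2*c - d))" unfolding id by linarith
  moreover have p: "hi1*lo0 > 0" using assms(1,2) by simp
  ultimately have "0 \<le> (n+3)*(hi2*c - d)" using mult_le_cancel_left_pos[OF p, of 0 "(n+3)*(hi2*c - d)"] by simp
  moreover have p2: "n+3 > 0" using assms(6) by simp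
  ultimately have "0 \<le> hi2*c - d" using mult_le_cancel_left_pos[OF p2, of 0 "hi2*c - d"] by simp
  then show ?thesis by simp
qed

lemma s2_lo: "1.4142 \<le> s2" unfolding s2_def by (rule real_le_rsqrt) (simp add: power2_eq_square)
lemma s2_hi: "s2 \<le> 1.4143" unfolding s2_def by (rule real_le_lsqrt) (auto simp add: power2_eq_square)

lemma lo_ge1: "x \<ge> 8 \<Longrightarrow> lo x \<ge> 1"
proof -
  assume x: "x \<ge> 8"
  have "LL \<ge> 3" unfolding LL_def using s2_pos by simp
  then have "LL*(10*x-12) \<ge> 3*(10*x-12)" using x by (intro mult_right_mono) auto
  then have "LL*(10*x-12) \<ge> 10*x+3" using x by (simp add: ring_distribs)
  then show ?thesis unfolding lo_def using x by (simp add: field_simps)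
qed

lemma hi_ge1: "x \<ge> 8 \<Longrightarrow> hi x \<ge> 1"
proof -
  assume x: "x \<ge> 8"
  have "LL \<ge> 3" unfolding LL_def using s2_pos by simp
  then have "LL*(10*x-8) \<ge> 3*(10*x-8)" using x by (intro mult_right_mono) auto
  then have "LL*(10*x-8) \<ge> 10*x+7" using x by (simp add: ring_distribs)
  then show ?thesis unfolding hi_def using x by (simp add: field_simps)
qed

definition Q :: "nat \<Rightarrow> bool" where
  "Q m \<longleftrightarrow> R m > 0 \<and> lo (real m) * R m \<le> R (m+1) \<and> R (m+1) \<le> hi (real m) * R m"

lemma Q8: "Q 8"
proof -
  have l: "LL \<le> 5.8286" "LL \<ge> 5.8284" unfolding LL_def using s2_lo s2_hi by auto
  show ?thesis unfolding Q_def lo_def hi_def using R8 R9 l by (simp add: field_simps)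
qed

lemma Q9: "Q 9"
proof -
  have l: "LL \<le> 5.8286" "LL \<ge> 5.8284" unfolding LL_def using s2_lo s2_hi by auto
  show ?thesis unfolding Q_def lo_def hi_def using R9 R10 l by (simp add: field_simps)
qed

lemma Q_step: assumes "m \<ge> 8" "Q m" "Q (m+1)" shows "Q (m+2)"
proof -
  define x where "x = real m"
  have x: "x \<ge> 8" using assms(1) x_def by simp
  have a: "R m > 0" "lo x * R m \<le> R (m+1)" "R (m+1) \<le> hi x * R m" using assms(2) unfolding Q_def x_def by auto
  have q3: "R (m+1) > 0 \<and> lo (real (m+1)) * R (m+1) \<le> R (m+1+1) \<and> R (m+1+1) \<le> hi (real (m+1)) * R (m+1)"
    using assms(3) unfolding Q_def .
  have e1: "real (m+1) = x+1" and e2: "m+1+1 = m+2" unfolding x_def by auto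
  have b: "R (m+1) > 0" "lo (x+1) * R (m+1) \<le> R (m+2)" "R (m+2) \<le> hi (x+1) * R (m+1)"
    using q3 unfolding e1 e2 by auto
  have lx: "lo x \<ge> 1" "hi x \<ge> 1" "lo (x+1) \<ge> 1" "hi (x+1) \<ge> 1" using x lo_ge1 hi_ge1 by auto
  have h7a: "(7*x+15)*1 \<le> (7*x+15)*hi x" using mult_left_mono[OF lx(2), of "7*x+15"] x by linarith
  have h7b: "(7*x+15)*1 \<le> (7*x+15)*lo x" using mult_left_mono[OF lx(1), of "7*x+15"] x by linarith
  have h8a: "(7*x+15)*hi x - (x+1) \<ge> 0" using h7a x by (smt (verit))
  have h8b: "(7*x+15)*lo x - (x+1) \<ge> 0" using h7b x by (smt (verit))
  note h8 = h8a h8b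
  have c: "R (m+2) > 0" using b(1,2) lx(3) by (smt (verit) mult_le_cancel_right1)
  have rec: "(x+3)*R(m+3) = (7*x+13)*R(m+2) - (7*x+15)*R(m+1) + (x+1)*R m" using R_rec[of m] x_def by simp
  have "lo (x+2) * R (m+2) \<le> R (m+3)"
    by (rule step_lo[OF _ _ a(3) b(2) _ _ _ K1[OF x] rec]) (use lx c x h8 in auto)
  moreover have "R (m+3) \<le> hi (x+2) * R (m+2)"
    by (rule step_hi[OF _ _ a(2) b(3) _ _ _ K2[OF x] rec]) (use lx c x h8 in auto)
  moreover have e3: "real (m+2) = x+2" and e4: "m+2+1 = m+3" unfolding x_def by auto
  have qq: "Q (m+2) \<longleftrightarrow> R (m+2) > 0 \<and> lo (real (m+2)) * R (m+2) \<le> R (m+2+1) \<and> R (m+2+1) \<le> hi (real (m+2)) * R (m+2)"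
    unfolding Q_def ..
  ultimately show ?thesis unfolding qq e3 e4 using c by simp
qed

lemma Q_all: "m \<ge> 8 \<Longrightarrow> Q m \<and> Q (m+1)"
proof (induction m rule: nat_induct_at_least)
  case base then show ?case using Q8 Q9 by simp
next
  case (Suc m) then show ?case using Q_step[of m] by simp
qed

lemma Rpos: "k \<ge> 1 \<Longrightarrow> R k > 0"
proof -
  assume k: "k \<ge> 1"
  show ?thesis
  proof (cases "k \<ge> 8")
    case True then show ?thesis using Q_all[of k] unfolding Q_def by simp
  next
    case False
    then have "k \<in> {1,2,3,4,5,6,7}" using k by auto
    then show ?thesis using R1 R2 R3 R4 R5 R6 R7 by auto
  qed
qed

definition r :: "nat \<Rightarrow> real" where "r k = R (Suc k) / R k"

lemma rpos: "k \<ge> 1 \<Longrightarrow> r k > 0" unfolding r_def using Rpos[of k] Rpos[of "Suc k"] by simp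

lemma r_Q: assumes "k \<ge> 8" shows "lo (real k) \<le> r k" "r k \<le> hi (real k)"
proof -
  have "Q k" using Q_all assms by blast
  then have "R k > 0" "lo (real k) * R k \<le> R (Suc k)" "R (Suc k) \<le> hi (real k) * R k" unfolding Q_def by auto
  then show "lo (real k) \<le> r k" "r k \<le> hi (real k)" unfolding r_def by (simp_all add: field_simps)
qed

lemma hi_le_lo: assumes "x \<ge> 8" shows "hi x \<le> lo (x+1)"
proof -
  have L: "LL > 0" unfolding LL_def using s2_pos by simp
  have "(10*x-8)/(10*x+7) \<le> (10*(x+1)-12)/(10*(x+1)+3)" using assms by (simp add: field_simps)
  then have "LL*((10*x-8)/(10*x+7)) \<le> LL*((10*(x+1)-12)/(10*(x+1)+3))" using L by (intro mult_left_mono) auto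
  then show ?thesis unfolding hi_def lo_def by simp
qed

lemma rinc: "k \<ge> 5 \<Longrightarrow> r k \<le> r (Suc k)"
proof -
  assume k: "k \<ge> 5"
  show ?thesis
  proof (cases "k \<ge> 8")
    case True
    have "r k \<le> hi (real k)" using r_Q True by blast
    also have "\<dots> \<le> lo (real k + 1)" using hi_le_lo True by simp
    also have "\<dots> \<le> r (Suc k)" using r_Q[of "Suc k"] True by (simp add: add.commute)
    finally show ?thesis .
  next
    case False
    then have "k \<in> {5,6,7}" using k by auto
    then show ?thesis unfolding r_def using R5 R6 R7 R8 R9 by (auto simp: eval_nat_numeral)
  qed
qed

lemma rat: assumes "m \<ge> 5" shows "real (Suc m) * real m * (r (Suc m) / r m - 1) \<le> 23/10"
proof (cases "m \<ge> 8")
  case True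
  define x where "x = real m"
  have x: "x \<ge> 8" using True x_def by simp
  have l: "lo x > 0" using lo_ge1[OF x] by simp
  have r1: "r (Suc m) \<le> hi (x+1)" using r_Q(2)[of "Suc m"] True x_def by (simp add: add.commute)
  have r2: "lo x \<le> r m" using r_Q(1)[of m] True x_def by simp
  have rp: "r (Suc m) > 0" using rpos[of "Suc m"] by simp
  have "r (Suc m) / r m \<le> hi (x+1) / lo x"
    using r1 r2 l rp by (intro frac_le) auto
  also have "\<dots> = ((10*x+2)/(10*x+17)) / ((10*x-12)/(10*x+3))"
  proof -
    have L: "LL \<noteq> 0" unfolding LL_def using s2_pos by simp
    have "hi (x+1) = LL * ((10*x+2)/(10*x+17))" unfolding hi_def by (simp add: algebra_simps)
    moreover have "lo x = LL * ((10*x-12)/(10*x+3))" unfolding lo_def by simp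
    ultimately show ?thesis using L by simp
  qed
  finally have q: "r (Suc m) / r m - 1 \<le> 210/((10*x+17)*(10*x-12))"
  proof -
    assume h: "r (Suc m) / r m \<le> ((10*x+2)/(10*x+17)) / ((10*x-12)/(10*x+3))"
    have d: "10*x+17 \<noteq> 0" "10*x-12 \<noteq> 0" "10*x+3 \<noteq> 0" "(10*x+17)*(10*x-12) > 0" using x by auto
    have "((10*x+2)/(10*x+17)) / ((10*x-12)/(10*x+3)) - 1 = 210/((10*x+17)*(10*x-12))"
      using d by (simp add: field_simps)
    then show ?thesis using h by linarith
  qed
  have p: "real (Suc m) * real m \<ge> 0" by simp
  have "real (Suc m) * real m * (r (Suc m) / r m - 1) \<le> (x+1)*x*(210/((10*x+17)*(10*x-12)))"
    using mult_left_mono[OF q p] x_def by (simp add: add.commute)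
  also have "\<dots> \<le> 23/10"
  proof -
    have "(x+1)*x*210 \<le> 23/10*((10*x+17)*(10*x-12))"
    proof -
      have h1: "0 \<le> 20*((x-8)*(x-8))" by simp
      have h2: "0 \<le> 225*(x-8)" using x by simp
      have "0 \<le> 20*((x-8)*(x-8)) + 225*(x-8) + 508/10" using h1 h2 by linarith
      then show ?thesis by (simp add: algebra_simps)
    qed
    moreover have "(10*x+17)*(10*x-12) > 0" using x by simp
    ultimately show ?thesis by (simp add: field_simps)
  qed
  finally show ?thesis .
next
  case False
  then have "m \<in> {5,6,7}" using assms by auto
  then show ?thesis unfolding r_def using R5 R6 R7 R8 R9 by (auto simp: eval_nat_numeral)
qed

definition a :: "nat \<Rightarrow> real" where "a k = ln (R k)"
definition S :: "nat \<Rightarrow> real" where "S k = real k * a (Suc k) - (real k + 1) * a k"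

lemma ln_r: "k \<ge> 1 \<Longrightarrow> ln (r k) = a (Suc k) - a k"
  unfolding r_def a_def using Rpos[of k] Rpos[of "Suc k"] by (simp add: ln_divide_pos)

lemma S_step: assumes "k \<ge> 1" shows "S (Suc k) = S k + (real k + 1) * (ln (r (Suc k)) - ln (r k))"
proof -
  have h1: "ln (r k) = a (Suc k) - a k" using ln_r[of k] assms by simp
  have h2: "ln (r (Suc k)) = a (Suc (Suc k)) - a (Suc k)" using ln_r[of "Suc k"] assms by simp
  show ?thesis unfolding S_def h1 h2 by (simp add: algebra_simps)
qed

lemma S_mono: "k \<ge> 5 \<Longrightarrow> S k \<ge> S 5"
proof (induction k rule: nat_induct_at_least)
  case base then show ?case by simp
next
  case (Suc k)
  have "ln (r k) \<le> ln (r (Suc k))" using rinc[OF Suc(1)] rpos[of k] Suc(1) by simp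
  then have "S (Suc k) \<ge> S k" using S_step[of k] Suc(1) by (simp add: mult_nonneg_nonneg)
  then show ?case using Suc by simp
qed

lemma ln_lower: fixes x :: real shows "x > 0 \<Longrightarrow> ln x \<ge> 2 - 3/x"
proof -
  assume x: "x > 0"
  have "ln (exp 1 / x) \<le> exp 1 / x - 1" using ln_le_minus_one[of "exp 1 / x"] x by simp
  then have "1 - ln x \<le> exp 1 / x - 1" using x by (simp add: ln_divide_pos)
  moreover have "exp 1 / x \<le> 3 / x" using x exp_le by (simp add: divide_right_mono)
  ultimately show ?thesis by simp
qed

lemma S5: "S 5 \<ge> 117/100"
proof -
  have "S 5 = ln ((1359::real)^5 / 329^6)"
    unfolding S_def a_def using R5 R6 ln_realpow[of "1359::real" 5] ln_realpow[of "329::real" 6]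
      ln_divide_pos[of "1359^5" "329^6"] by simp
  moreover have "ln ((1359::real)^5 / 329^6) \<ge> 2 - 3/((1359::real)^5 / 329^6)" by (rule ln_lower) simp
  moreover have "2 - 3/((1359::real)^5 / 329^6) \<ge> 117/100" by simp
  ultimately show ?thesis by simp
qed

theorem theorem4p5:
  shows "strictly_log_concave_from 5 (\<lambda>n. root n (R n))"
  unfolding strictly_log_concave_from_def
proof (intro conjI allI impI)
  fix n :: nat assume "n \<ge> 5"
  then show "root n (R n) > 0" using Rpos[of n] by (intro real_root_gt_zero) auto
next
  fix n :: nat assume n6: "n \<ge> Suc 5"
  then obtain m where nm: "n = Suc m" and m5: "m \<ge> 5" by (cases n) auto
  define N where "N = real n"
  have N: "N \<ge> 6" using n6 N_def by simp
  have pos: "R m > 0" "R n > 0" "R (n+1) > 0" using Rpos m5 nm by auto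
  have lnl: "ln (root m (R m) * root (n+1) (R (n+1))) = a m / (N-1) + a (n+1) / (N+1)"
    using pos m5 nm N_def by (simp add: ln_mult ln_root a_def real_root_gt_zero)
  have lnr: "ln ((root n (R n))^2) = 2 * a n / N"
    using pos nm N_def by (simp add: ln_realpow ln_root a_def real_root_gt_zero)
  have Sn: "S n = S m + N * (ln (r n) - ln (r m))" using S_step[of m] m5 nm N_def by simp
  have key: "N*(N-1)*(ln (r n) - ln (r m)) < 2 * S m"
  proof -
    have rp: "r n > 0" "r m > 0" using rpos m5 nm by auto
    have "ln (r n) - ln (r m) = ln (r n / r m)" using rp by (simp add: ln_divide_pos)
    also have "\<dots> \<le> r n / r m - 1" using rp by (intro ln_le_minus_one) simp
    finally have h: "ln (r n) - ln (r m) \<le> r n / r m - 1" .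
    have "N*(N-1)*(ln (r n) - ln (r m)) \<le> N*(N-1)*(r n / r m - 1)"
      using h N by (intro mult_left_mono) auto
    also have "\<dots> \<le> 23/10" using rat[OF m5] nm N_def by simp
    also have "\<dots> < 2 * S m" using S_mono[OF m5] S5 by simp
    finally show ?thesis .
  qed
  have "a m / (N-1) + a (n+1) / (N+1) < 2 * a n / N"
  proof -
    have Sm: "S m = (N-1) * a n - N * a m" unfolding S_def using nm N_def by simp
    have Sn': "S n = N * a (n+1) - (N+1) * a n" unfolding S_def using N_def by simp
    have "(N-1) * S n < (N+1) * S m" unfolding Sn using key by (simp add: algebra_simps)
    then have ineq: "N*(N+1)*a m + N*(N-1)*a (n+1) < 2*(N-1)*(N+1)*a n"
      unfolding Sm Sn' by (simp add: algebra_simps)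
    have D: "N*(N-1)*(N+1) > 0" using N by simp
    have e1: "a m/(N-1) + a(n+1)/(N+1) = (N*(N+1)*a m + N*(N-1)*a(n+1))/(N*(N-1)*(N+1))"
      using N D by (simp add: field_simps)
    have e2: "2*a n/N = (2*(N-1)*(N+1)*a n)/(N*(N-1)*(N+1))" using N D by (simp add: field_simps)
    show ?thesis unfolding e1 e2 using divide_strict_right_mono[OF ineq D] .
  qed
  then have "ln (root m (R m) * root (n+1) (R (n+1))) < ln ((root n (R n))^2)" using lnl lnr by simp
  moreover have "root m (R m) * root (n+1) (R (n+1)) > 0" "(root n (R n))^2 > 0"
    using pos m5 nm by (auto intro!: real_root_gt_zero)
  ultimately show "root (n - 1) (R (n - 1)) * root (n + 1) (R (n + 1)) < (root n (R n))^2"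
    using nm by simp
qed


end
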